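(* Let $I=\{1,\dots,\ell\}$, $J=\{\ell+1,\dots,p\}$, let $h_1,\dots,h_p\colon\mathbb R^n\times\mathbb R^m\to\overline{\mathbb R}$ and $\Gamma(x):=\{y\in\mathbb R^m\mid h_i(x,y)\le0\ (i\in I),\ h_i(x,y)=0\ (i\in J)\}$. Fix $\bar x\in\operatorname{dom}\Gamma$ and $\bar y\in\Gamma(\bar x)$. Assume that $h_1,\dots,h_p$ are continuous and continuously differentiable with respect to $y$ in a neighborhood of $\{\bar x\}\times\Gamma(\bar x)$, and that $h_i(x,\cdot)\colon\mathbb R^m\to\mathbb R$ is continuous for every $x\in\operatorname{dom}\Gamma$ and every $i$. Assume (A1): for each $x\in\mathbb R^n$, the functions $h_i(x,\cdot)$, $i\in I$, are convex and the functions $h_i(x,\cdot)$, $i\in J$, are affine; and (A2): $\Gamma$ is locally bounded at $\bar x$. Suppose there exist a constant $M>0$ and sequences $\{x^k\}\subset\operatorname{dom}\Gamma$, $\{\nu^k\}\subset\mathbb R^m$, $\{y^k\}\subset\mathbb R^m$ with $x^k\to\bar x$, $\nu^k\to\bar y$, $\nu^k\notin\Gamma(x^k)$ and $y^k\in\Pi(\nu^k,\Gamma(x^k))$ for all $k$, such that $\Lambda^M_{\nu^k}(x^k,y^k)\neq\emptyset$ for all sufficiently large $k$. Then $y^k\to\bar y$ and, for all sufficiently large $k$, $$\operatorname{dist}(\nu^k,\Gamma(x^k))\le M\max\{0,\max_{i\in I}h_i(x^k,\nu^k),\max_{i\in J}|h_i(x^k,\nu^k)|\}.$$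
   Context: $\operatorname{dom}\Gamma:=\{x\mid\Gamma(x)\ne\emptyset\}$; $\|\cdot\|$ Euclidean norm; $\operatorname{dist}(\nu,A):=\inf_{z\in A}\|z-\nu\|$; $\Pi(\nu,A):=\operatorname{argmin}\{\|z-\nu\|\mid z\in A\}$. $\Gamma$ is locally bounded at $\bar x$ if there are a bounded set $B$ and a neighborhood $V$ of $\bar x$ with $\Gamma(x)\subset B$ for all $x\in V$. For $x\in\operatorname{dom}\Gamma$, $\nu\notin\Gamma(x)$, $y\in\Pi(\nu,\Gamma(x))$ and $M>0$: $\Lambda_\nu(x,y):=\{\lambda\in\mathbb R^p\mid \frac{y-\nu}{\|y-\nu\|}+\sum_{i=1}^p\lambda_i\nabla_yh_i(x,y)=0,\ \lambda_i\ge0,\ \lambda_ih_i(x,y)=0\ \forall i\in I\}$ and $\Lambda^M_\nu(x,y):=\{\lambda\in\Lambda_\nu(x,y)\mid\sum_{i=1}^p|\lambda_i|\le M\}$. *)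

theory Defs
  imports "HOL-Analysis.Analysis" "HOL-Library.Extended_Real"
begin

definition Gamma :: "(nat \<Rightarrow> 'a \<Rightarrow> 'b \<Rightarrow> ereal) \<Rightarrow> nat \<Rightarrow> nat \<Rightarrow> 'a \<Rightarrow> 'b set" where
  "Gamma h l p x = {y. (\<forall>i\<in>{1..l}. h i x y \<le> 0) \<and> (\<forall>i\<in>{l+1..p}. h i x y = 0)}"

definition domS :: "('a \<Rightarrow> 'b set) \<Rightarrow> 'a set" where
  "domS G = {x. G x \<noteq> {}}"

definition locally_bounded_at :: "('a::topological_space \<Rightarrow> 'b::metric_space set) \<Rightarrow> 'a \<Rightarrow> bool" where
  "locally_bounded_at G xb \<longleftrightarrow>
     (\<exists>B V. bounded B \<and> open V \<and> xb \<in> V \<and> (\<forall>x\<in>V. G x \<subseteq> B))"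

definition proj :: "'b::real_normed_vector \<Rightarrow> 'b set \<Rightarrow> 'b set" where
  "proj \<nu> A = {z \<in> A. \<forall>w\<in>A. norm (z - \<nu>) \<le> norm (w - \<nu>)}"

text \<open>Gradient (with respect to the Euclidean inner product) of a function that is
  real-valued near y; chosen by Hilbert choice when it exists.\<close>
definition ygrad :: "('b::euclidean_space \<Rightarrow> ereal) \<Rightarrow> 'b \<Rightarrow> 'b" where
  "ygrad f y = (SOME g. ((\<lambda>z. real_of_ereal (f z)) has_derivative (\<lambda>v. g \<bullet> v)) (at y))"

definition ereal_convex :: "('b::real_vector \<Rightarrow> ereal) \<Rightarrow> bool" where
  "ereal_convex f \<longleftrightarrow> convex {(y, r::real). f y \<le> ereal r}"

definition ereal_affine :: "('b::real_inner \<Rightarrow> ereal) \<Rightarrow> bool" where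
  "ereal_affine f \<longleftrightarrow> (\<exists>a b. \<forall>y. f y = ereal (a \<bullet> y + b))"

definition Lam :: "(nat \<Rightarrow> 'a \<Rightarrow> 'b::euclidean_space \<Rightarrow> ereal) \<Rightarrow> nat \<Rightarrow> nat \<Rightarrow> 'b \<Rightarrow> 'a \<Rightarrow> 'b \<Rightarrow> (nat \<Rightarrow> real) set" where
  "Lam h l p \<nu> x y = {lam.
      (1 / norm (y - \<nu>)) *\<^sub>R (y - \<nu>) + (\<Sum>i=1..p. lam i *\<^sub>R ygrad (h i x) y) = 0
    \<and> (\<forall>i\<in>{1..l}. lam i \<ge> 0 \<and> lam i * real_of_ereal (h i x y) = 0)
    \<and> (\<forall>i. i \<notin> {1..p} \<longrightarrow> lam i = 0)}"

definition LamM :: "(nat \<Rightarrow> 'a \<Rightarrow> 'b::euclidean_space \<Rightarrow> ereal) \<Rightarrow> nat \<Rightarrow> nat \<Rightarrow> real \<Rightarrow> 'b \<Rightarrow> 'a \<Rightarrow> 'b \<Rightarrow> (nat \<Rightarrow> real) set" where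
  "LamM h l p M \<nu> x y = {lam \<in> Lam h l p \<nu> x y. (\<Sum>i=1..p. \<bar>lam i\<bar>) \<le> M}"

end

theory Submission
  imports Defs
begin

lemma ereal_convex_real:
  fixes f :: "'b::euclidean_space \<Rightarrow> ereal"
  assumes "ereal_convex f" "\<And>y. \<bar>f y\<bar> \<noteq> \<infinity>"
  shows "convex_on UNIV (\<lambda>y. real_of_ereal (f y))"
proof -
  have e: "f y = ereal (real_of_ereal (f y))" for y using assms(2)[of y] by (cases "f y") auto
  have "{(y, r::real). f y \<le> ereal r} = epigraph UNIV (\<lambda>y. real_of_ereal (f y))"
  proof -
    have "f y \<le> ereal r \<longleftrightarrow> real_of_ereal (f y) \<le> r" for y r
      by (subst e) simp
    then show ?thesis unfolding epigraph_def by auto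
  qed
  then show ?thesis using assms(1) convex_epigraph unfolding ereal_convex_def by metis
qed

lemma grad_ineq:
  fixes f :: "'b::euclidean_space \<Rightarrow> real"
  assumes cv: "convex_on UNIV f" and d: "(f has_derivative (\<lambda>v. g \<bullet> v)) (at y)"
  shows "f y + g \<bullet> (w - y) \<le> f w"
proof -
  define \<phi> where "\<phi> t = f (y + t *\<^sub>R (w - y))" for t :: real
  have c: "convex_on UNIV \<phi>"
  proof (rule convex_onI)
    fix t a b :: real assume "t > 0" "t < 1"
    have "y + ((1 - t) * a + t * b) *\<^sub>R (w - y) = (1 - t) *\<^sub>R (y + a *\<^sub>R (w - y)) + t *\<^sub>R (y + b *\<^sub>R (w - y))"
      by (simp add: algebra_simps)
    then show "\<phi> ((1 - t) *\<^sub>R a + t *\<^sub>R b) \<le> (1 - t) * \<phi> a + t * \<phi> b"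
      unfolding \<phi>_def using convex_onD[OF cv, of t] \<open>t>0\<close> \<open>t<1\<close> by simp
  qed simp
  have A: "((\<lambda>t. y + t *\<^sub>R (w - y)) has_derivative (\<lambda>t. t *\<^sub>R (w - y))) (at 0)"
    by (auto intro!: derivative_eq_intros)
  have B: "(f has_derivative (\<lambda>v. g \<bullet> v)) (at (y + 0 *\<^sub>R (w - y)))" using d by simp
  have "(\<phi> has_derivative (\<lambda>t. g \<bullet> (t *\<^sub>R (w - y)))) (at 0)"
    unfolding \<phi>_def by (rule has_derivative_compose[OF A B])
  then have "(\<phi> has_field_derivative (g \<bullet> (w - y))) (at 0)"
    by (simp add: has_field_derivative_def mult.commute[of _ "g \<bullet> (w - y)"])
  then have "\<phi> 1 - \<phi> 0 \<ge> (g \<bullet> (w - y)) * (1 - 0)"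
    by (intro convex_on_imp_above_tangent[OF c]) auto
  then show ?thesis by (simp add: \<phi>_def)
qed

theorem lemma3p1:
  fixes h :: "nat \<Rightarrow> 'a::euclidean_space \<Rightarrow> 'b::euclidean_space \<Rightarrow> ereal"
    and l p :: nat and xb :: 'a and yb :: 'b and M :: real
    and x :: "nat \<Rightarrow> 'a" and \<nu> yk :: "nat \<Rightarrow> 'b"
  assumes lp: "l \<le> p"
    and xb_dom: "xb \<in> domS (Gamma h l p)"
    and yb_in: "yb \<in> Gamma h l p xb"
    and smooth: "\<exists>U. open U \<and> {xb} \<times> Gamma h l p xb \<subseteq> U \<and>
        (\<forall>i\<in>{1..p}.
           (\<forall>(x', y')\<in>U. \<bar>h i x' y'\<bar> \<noteq> \<infinity>)
         \<and> continuous_on U (\<lambda>(x', y'). h i x' y')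
         \<and> (\<forall>(x', y')\<in>U. ((\<lambda>z. real_of_ereal (h i x' z)) has_derivative
                               (\<lambda>v. ygrad (h i x') y' \<bullet> v)) (at y'))
         \<and> continuous_on U (\<lambda>(x', y'). ygrad (h i x') y'))"
    and slice_cont: "\<forall>x'\<in>domS (Gamma h l p). \<forall>i\<in>{1..p}.
        (\<forall>y'. \<bar>h i x' y'\<bar> \<noteq> \<infinity>) \<and> continuous_on UNIV (\<lambda>y'. real_of_ereal (h i x' y'))"
    and A1: "\<forall>x'. (\<forall>i\<in>{1..l}. ereal_convex (h i x')) \<and> (\<forall>i\<in>{l+1..p}. ereal_affine (h i x'))"
    and A2: "locally_bounded_at (Gamma h l p) xb"
    and M_pos: "M > 0"
    and x_dom: "\<forall>k. x k \<in> domS (Gamma h l p)"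
    and x_lim: "x \<longlonglongrightarrow> xb"
    and \<nu>_lim: "\<nu> \<longlonglongrightarrow> yb"
    and \<nu>_out: "\<forall>k. \<nu> k \<notin> Gamma h l p (x k)"
    and yk_proj: "\<forall>k. yk k \<in> proj (\<nu> k) (Gamma h l p (x k))"
    and Lam_ne: "eventually (\<lambda>k. LamM h l p M (\<nu> k) (x k) (yk k) \<noteq> {}) sequentially"
  shows "yk \<longlonglongrightarrow> yb \<and>
    eventually (\<lambda>k. ereal (infdist (\<nu> k) (Gamma h l p (x k)))
        \<le> ereal M * max 0 (max (SUP i\<in>{1..l}. h i (x k) (\<nu> k))
                               (SUP i\<in>{l+1..p}. \<bar>h i (x k) (\<nu> k)\<bar>))) sequentially"
proof -
  define G where "G = Gamma h l p"
  define H where "H i a b = real_of_ereal (h i a b)" for i a b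
  obtain U where Uo: "open U" and UG: "{xb} \<times> G xb \<subseteq> U" and P: "\<forall>i\<in>{1..p}.
           (\<forall>(x', y')\<in>U. \<bar>h i x' y'\<bar> \<noteq> \<infinity>)
         \<and> continuous_on U (\<lambda>(x', y'). h i x' y')
         \<and> (\<forall>(x', y')\<in>U. ((\<lambda>z. real_of_ereal (h i x' z)) has_derivative
                               (\<lambda>v. ygrad (h i x') y' \<bullet> v)) (at y'))
         \<and> continuous_on U (\<lambda>(x', y'). ygrad (h i x') y')"
    using smooth unfolding G_def by blast
  have Ufin: "\<bar>h i a b\<bar> \<noteq> \<infinity>" if "i \<in> {1..p}" "(a, b) \<in> U" for i a b
    using bspec[OF P that(1)] that(2) by fastforce
  have Ucont: "continuous_on U (\<lambda>(a, b). h i a b)" if "i \<in> {1..p}" for i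
    using bspec[OF P that(1)] by blast
  have Uder: "((\<lambda>z. H i a z) has_derivative (\<lambda>v. ygrad (h i a) b \<bullet> v)) (at b)"
    if "i \<in> {1..p}" "(a, b) \<in> U" for i a b
    using bspec[OF P that(1)] that(2) unfolding H_def by fastforce
  have domfin: "h i a y = ereal (H i a y)" if "a \<in> domS G" "i \<in> {1..p}" for i a y
    using slice_cont that unfolding G_def H_def by (metis ereal_real')
  have Hslice: "continuous_on UNIV (H i a)" if "a \<in> domS G" "i \<in> {1..p}" for i a
    using slice_cont that unfolding G_def H_def by (simp add: o_def)
  have Gmem: "y \<in> G a \<longleftrightarrow> (\<forall>i\<in>{1..l}. H i a y \<le> 0) \<and> (\<forall>i\<in>{l+1..p}. H i a y = 0)"
    if "a \<in> domS G" for a y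
  proof -
    have "\<forall>i\<in>{1..l}. h i a y = ereal (H i a y)" "\<forall>i\<in>{l+1..p}. h i a y = ereal (H i a y)"
      using domfin[OF that] lp by auto
    then show ?thesis unfolding G_def Gamma_def by (auto simp: G_def zero_ereal_def)
  qed
  have xbdom: "xb \<in> domS G" using xb_dom G_def by simp
  have xdom: "x k \<in> domS G" for k using x_dom G_def by simp
  have HUcont: "continuous_on U (\<lambda>z. H i (fst z) (snd z))" if "i \<in> {1..p}" for i
  proof -
    have "continuous_on U (real_of_ereal \<circ> (\<lambda>(a, b). h i a b))"
      using continuous_on_iff_real[of U "\<lambda>(a, b). h i a b"] Ucont[OF that] Ufin[OF that] by auto
    then show ?thesis unfolding H_def o_def by (simp add: case_prod_beta)
  qed
  have seqlim: "(\<lambda>n. H i (a n) (b n)) \<longlonglongrightarrow> H i a0 b0"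
    if "i \<in> {1..p}" "(a0, b0) \<in> U" "a \<longlonglongrightarrow> a0" "b \<longlonglongrightarrow> b0" for i a b a0 b0
  proof -
    have t: "(\<lambda>n. (a n, b n)) \<longlonglongrightarrow> (a0, b0)" using that by (intro tendsto_Pair)
    have "eventually (\<lambda>n. (a n, b n) \<in> U) sequentially"
      using topological_tendstoD[OF t Uo that(2)] .
    from continuous_on_tendsto_compose[OF HUcont[OF that(1)] t that(2) this] show ?thesis by simp
  qed
  have ybG: "yb \<in> G xb" using yb_in G_def by simp
  have ybU: "(xb, yb) \<in> U" using UG ybG by auto
  have ykG: "yk k \<in> G (x k)" for k using yk_proj unfolding proj_def G_def by auto
  have \<nu>G: "\<nu> k \<notin> G (x k)" for k using \<nu>_out G_def by simp
  have Hyb_I: "H i xb yb \<le> 0" if "i \<in> {1..l}" for i using ybG Gmem[OF xbdom] that by auto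
  have Hyb_J: "H i xb yb = 0" if "i \<in> {l+1..p}" for i using ybG Gmem[OF xbdom] that by auto
  have convI: "convex_on UNIV (H i a)" if "a \<in> domS G" "i \<in> {1..l}" for i a
  proof -
    have "i \<in> {1..p}" using that lp by auto
    then have "\<bar>h i a y\<bar> \<noteq> \<infinity>" for y using domfin[OF that(1)] by simp
    then show ?thesis using ereal_convex_real[of "h i a"] A1 that unfolding H_def by blast
  qed
  have affJ: "\<exists>c d. \<forall>y. H i a y = c \<bullet> y + d" if iJ: "i \<in> {l+1..p}" for i a
  proof -
    obtain c d where "\<forall>y. h i a y = ereal (c \<bullet> y + d)" using A1 iJ unfolding ereal_affine_def by blast
    then show ?thesis unfolding H_def by auto
  qed
  have lim_in: "(xb, ys) \<in> U" if sm: "strict_mono s" and ysl: "(\<lambda>n. yk (s n)) \<longlonglongrightarrow> ys" for s ys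
  proof -
    define z where "z t = (1 - t) *\<^sub>R yb + t *\<^sub>R ys" for t :: real
    have xs: "(\<lambda>n. x (s n)) \<longlonglongrightarrow> xb" using LIMSEQ_subseq_LIMSEQ[OF x_lim sm] by (simp add: o_def)
    have claimA: "z t \<in> G xb" if t01: "t \<in> {0..1}" and zU: "(xb, z t) \<in> U" for t
    proof -
      define w where "w n = (1 - t) *\<^sub>R yb + t *\<^sub>R yk (s n)" for n
      have wl: "w \<longlonglongrightarrow> z t" unfolding w_def z_def by (intro tendsto_intros ysl)
      have L1: "(\<lambda>n. H i (x (s n)) (w n)) \<longlonglongrightarrow> H i xb (z t)" if "i \<in> {1..p}" for i
        using seqlim[OF that zU xs wl] .
      have L2: "(\<lambda>n. (1 - t) * H i (x (s n)) yb) \<longlonglongrightarrow> (1 - t) * H i xb yb" if "i \<in> {1..p}" for i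
        using seqlim[OF that ybU xs tendsto_const] by (intro tendsto_intros)
      have I: "H i xb (z t) \<le> 0" if i: "i \<in> {1..l}" for i
      proof -
        have ip: "i \<in> {1..p}" using i lp by auto
        have "H i (x (s n)) (w n) \<le> (1 - t) * H i (x (s n)) yb" for n
        proof -
          have "H i (x (s n)) (w n) \<le> (1 - t) * H i (x (s n)) yb + t * H i (x (s n)) (yk (s n))"
            unfolding w_def using convex_onD[OF convI[OF xdom i], of t yb "yk (s n)"] t01 by auto
          moreover have "H i (x (s n)) (yk (s n)) \<le> 0" using ykG[of "s n"] Gmem[OF xdom] i by auto
          moreover have "t \<ge> 0" using t01 by simp
          ultimately have "t * H i (x (s n)) (yk (s n)) \<le> 0" by (simp add: mult_nonneg_nonpos)
          with \<open>H i (x (s n)) (w n) \<le> _\<close> show ?thesis by linarith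
        qed
        then have "H i xb (z t) \<le> (1 - t) * H i xb yb"
          by (intro LIMSEQ_le[OF L1[OF ip] L2[OF ip]]) auto
        also have "\<dots> \<le> 0" using Hyb_I[OF i] t01 by (simp add: mult_nonneg_nonpos)
        finally show ?thesis .
      qed
      have J: "H i xb (z t) = 0" if i: "i \<in> {l+1..p}" for i
      proof -
        have ip: "i \<in> {1..p}" using i by auto
        have "H i (x (s n)) (w n) = (1 - t) * H i (x (s n)) yb" for n
        proof -
          obtain c d where cd: "\<forall>y. H i (x (s n)) y = c \<bullet> y + d" using affJ[OF i] by blast
          have h0: "H i (x (s n)) (yk (s n)) = 0" using ykG[of "s n"] Gmem[OF xdom] i by auto
          have "H i (x (s n)) (w n) = (1 - t) * H i (x (s n)) yb + t * H i (x (s n)) (yk (s n))"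
            unfolding w_def using cd by (simp add: inner_add_right algebra_simps)
          then show ?thesis using h0 by simp
        qed
        then have "(\<lambda>n. H i (x (s n)) (w n)) \<longlonglongrightarrow> (1 - t) * H i xb yb" using L2[OF ip] by simp
        then have "H i xb (z t) = (1 - t) * H i xb yb" using LIMSEQ_unique L1[OF ip] by blast
        then show ?thesis using Hyb_J[OF i] by simp
      qed
      show ?thesis using I J Gmem[OF xbdom] by auto
    qed
    define T where "T = {t \<in> {0..1::real}. z t \<in> G xb}"
    have zc: "continuous (at t) z" for t unfolding z_def by (intro continuous_intros)
    have clG: "closed (G xb)"
    proof -
      have eqG: "G xb = (\<Inter>i\<in>{1..l}. {y. H i xb y \<le> 0}) \<inter> (\<Inter>i\<in>{l+1..p}. {y. H i xb y = 0})"
        using Gmem[OF xbdom] by auto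
      have c1: "closed {y. H i xb y \<le> 0}" if "i \<in> {1..l}" for i
        using Hslice[OF xbdom, of i] that lp by (intro closed_Collect_le) auto
      have c2: "closed {y. H i xb y = 0}" if "i \<in> {l+1..p}" for i
        using Hslice[OF xbdom, of i] that lp by (intro closed_Collect_eq) auto
      show ?thesis unfolding eqG using c1 c2 by (intro closed_Int closed_INT) auto
    qed
    have cT: "closedin (top_of_set {0..1}) T"
    proof -
      have "T = {0..1} \<inter> z -` G xb" unfolding T_def by auto
      moreover have "closed (z -` G xb)" using continuous_closed_vimage[OF clG zc] .
      ultimately show ?thesis by (simp add: closedin_closed_Int)
    qed
    have oT: "openin (top_of_set {0..1}) T"
    proof -
      have "T = {0..1} \<inter> (\<lambda>t. (xb, z t)) -` U" unfolding T_def using claimA UG by auto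
      moreover have "open ((\<lambda>t. (xb, z t)) -` U)"
        by (rule continuous_open_vimage[OF Uo]) (intro continuous_intros zc)
      ultimately show ?thesis by (simp add: openin_open_Int)
    qed
    have "0 \<in> T" unfolding T_def z_def using ybG by simp
    moreover have "T = {} \<or> T = {0..1}" using connected_clopen[of "{0..1::real}"] cT oT by simp
    ultimately have "T = {0..1}" by blast
    then have "1 \<in> T" by auto
    then have "ys \<in> G xb" unfolding T_def z_def by simp
    then show ?thesis using UG by auto
  qed
  have evU: "eventually (\<lambda>k. (x k, yk k) \<in> U) sequentially"
  proof (rule ccontr)
    assume nev: "\<not> ?thesis"
    obtain B V where B: "bounded B" "open V" "xb \<in> V" "\<forall>a\<in>V. G a \<subseteq> B"
      using A2 unfolding locally_bounded_at_def G_def by blast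
    have "eventually (\<lambda>k. x k \<in> V) sequentially" using topological_tendstoD[OF x_lim B(2,3)] .
    then have evB: "eventually (\<lambda>k. yk k \<in> B) sequentially"
      by eventually_elim (use B(4) ykG in blast)
    have "frequently (\<lambda>k. (x k, yk k) \<notin> U) sequentially" using nev by (simp add: not_eventually)
    then have "frequently (\<lambda>k. yk k \<in> B \<and> (x k, yk k) \<notin> U) sequentially"
      using evB by (rule frequently_eventually_conj)
    then have "infinite {k. yk k \<in> B \<and> (x k, yk k) \<notin> U}"
      using frequently_cofinite[of "\<lambda>k. yk k \<in> B \<and> (x k, yk k) \<notin> U"] unfolding cofinite_eq_sequentially by simp
    then have "\<exists>r::nat\<Rightarrow>nat. strict_mono r \<and> (\<forall>n. r n \<in> {k. yk k \<in> B \<and> (x k, yk k) \<notin> U})"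
      by (rule infinite_enumerate)
    then obtain r :: "nat \<Rightarrow> nat" where r: "strict_mono r" "\<forall>n. r n \<in> {k. yk k \<in> B \<and> (x k, yk k) \<notin> U}"
      by blast
    have "bounded (range (yk \<circ> r))" using r(2) by (intro bounded_subset[OF B(1)]) auto
    then obtain ys r' where r': "strict_mono r'" "((yk \<circ> r) \<circ> r') \<longlonglongrightarrow> ys"
      using bounded_imp_convergent_subsequence by blast
    define s where "s = r \<circ> r'"
    have sm: "strict_mono s" unfolding s_def using r(1) r'(1) by (rule strict_mono_o)
    have ysl: "(\<lambda>n. yk (s n)) \<longlonglongrightarrow> ys" using r'(2) by (simp add: s_def o_def)
    have "(xb, ys) \<in> U" using lim_in[OF sm ysl] .
    moreover have "(\<lambda>n. (x (s n), yk (s n))) \<longlonglongrightarrow> (xb, ys)"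
      using LIMSEQ_subseq_LIMSEQ[OF x_lim sm] ysl by (intro tendsto_Pair) (simp_all add: o_def)
    ultimately have "eventually (\<lambda>n. (x (s n), yk (s n)) \<in> U) sequentially"
      using topological_tendstoD[OF _ Uo] by blast
    moreover have "(x (s n), yk (s n)) \<notin> U" for n using r(2) by (simp add: s_def)
    ultimately have "eventually (\<lambda>n. False) sequentially" by (simp add: eventually_mono)
    then show False by simp
  qed
  have key: "norm (yk k - \<nu> k) \<le> M * e"
    if kU: "(x k, yk k) \<in> U" and lam: "lam \<in> LamM h l p M (\<nu> k) (x k) (yk k)"
      and e0: "e \<ge> 0" and eI: "\<forall>i\<in>{1..l}. H i (x k) (\<nu> k) \<le> e"
      and eJ: "\<forall>i\<in>{l+1..p}. \<bar>H i (x k) (\<nu> k)\<bar> \<le> e" for k lam e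
  proof -
    define y where "y = yk k"
    define v where "v = \<nu> k"
    define a where "a = x k"
    define g where "g i = ygrad (h i a) y" for i
    have yv: "y \<noteq> v" using ykG \<nu>G unfolding y_def v_def by metis
    define nd where "nd = norm (y - v)"
    have nd0: "nd > 0" using yv unfolding nd_def by simp
    have kkt: "(1 / nd) *\<^sub>R (y - v) + (\<Sum>i=1..p. lam i *\<^sub>R g i) = 0"
      and lsign: "\<forall>i\<in>{1..l}. lam i \<ge> 0 \<and> lam i * H i a y = 0"
      and lsum: "(\<Sum>i=1..p. \<bar>lam i\<bar>) \<le> M"
      using lam unfolding LamM_def Lam_def nd_def g_def y_def v_def a_def H_def by auto
    have S: "(\<Sum>i=1..p. lam i *\<^sub>R g i) = - ((1 / nd) *\<^sub>R (y - v))"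
      using kkt by (simp add: add_eq_0_iff)
    have "(\<Sum>i=1..p. lam i * (g i \<bullet> (v - y))) = (\<Sum>i=1..p. lam i *\<^sub>R g i) \<bullet> (v - y)"
      by (simp add: inner_sum_left)
    also have "\<dots> = - ((1 / nd) *\<^sub>R (y - v)) \<bullet> (v - y)" by (simp only: S)
    also have "\<dots> = (1 / nd) * ((y - v) \<bullet> (y - v))"
      by (simp add: inner_diff_left inner_diff_right inner_commute algebra_simps)
    also have "\<dots> = nd" using nd0 unfolding nd_def by (simp add: power2_norm_eq_inner[symmetric] power2_eq_square)
    finally have sumeq: "(\<Sum>i=1..p. lam i * (g i \<bullet> (v - y))) = nd" .
    have adom: "a \<in> domS G" unfolding a_def by (rule xdom)
    have yG: "y \<in> G a" unfolding y_def a_def by (rule ykG)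
    have aU: "(a, y) \<in> U" using kU unfolding a_def y_def .
    have termb: "lam i * (g i \<bullet> (v - y)) \<le> \<bar>lam i\<bar> * e" if i: "i \<in> {1..p}" for i
    proof -
      have der: "((\<lambda>z. H i a z) has_derivative (\<lambda>u. g i \<bullet> u)) (at y)"
        unfolding g_def using Uder[OF i aU] .
      show ?thesis
      proof (cases "i \<le> l")
        case True
        then have iI: "i \<in> {1..l}" using i by auto
        have "H i a y + g i \<bullet> (v - y) \<le> H i a v"
          using grad_ineq[OF convI[OF adom iI] der] .
        moreover have "lam i \<ge> 0" "lam i * H i a y = 0" using lsign iI by auto
        ultimately have "lam i * (g i \<bullet> (v - y)) \<le> lam i * H i a v"
          by (metis add.commute add_le_imp_le_diff mult_left_mono right_diff_distrib' diff_zero)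
        also have "\<dots> \<le> lam i * e" using eI iI \<open>lam i \<ge> 0\<close> unfolding a_def v_def
          by (simp add: mult_left_mono)
        finally show ?thesis using \<open>lam i \<ge> 0\<close> by simp
      next
        case False
        then have iJ: "i \<in> {l+1..p}" using i by auto
        obtain c d where cd: "\<forall>z. H i a z = c \<bullet> z + d" using affJ[OF iJ] by blast
        have "((\<lambda>z. H i a z) has_derivative (\<lambda>u. c \<bullet> u)) (at y)"
          unfolding cd[rule_format] by (auto intro!: derivative_eq_intros)
        then have "(\<lambda>u. g i \<bullet> u) = (\<lambda>u. c \<bullet> u)" using has_derivative_unique der by blast
        then have "g i \<bullet> (v - y) = c \<bullet> (v - y)" by metis
        also have "\<dots> = H i a v - H i a y" using cd by (simp add: inner_diff_right)
        also have "\<dots> = H i a v" using yG Gmem[OF adom] iJ by auto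
        finally have "lam i * (g i \<bullet> (v - y)) = lam i * H i a v" by simp
        also have "\<dots> \<le> \<bar>lam i\<bar> * \<bar>H i a v\<bar>" by (simp add: abs_mult[symmetric])
        also have "\<dots> \<le> \<bar>lam i\<bar> * e" using eJ iJ unfolding a_def v_def
          by (simp add: mult_left_mono)
        finally show ?thesis .
      qed
    qed
    have "nd \<le> (\<Sum>i=1..p. \<bar>lam i\<bar> * e)" unfolding sumeq[symmetric] by (rule sum_mono) (rule termb)
    also have "\<dots> = (\<Sum>i=1..p. \<bar>lam i\<bar>) * e" by (simp add: sum_distrib_right)
    also have "\<dots> \<le> M * e" using lsum e0 by (simp add: mult_right_mono)
    finally show ?thesis unfolding nd_def y_def v_def .
  qed
  have evL: "eventually (\<lambda>k. (x k, yk k) \<in> U \<and> LamM h l p M (\<nu> k) (x k) (yk k) \<noteq> {}) sequentially"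
    using evU Lam_ne by (rule eventually_conj)
  define e where "e k = (\<Sum>i\<in>{1..l}. max 0 (H i (x k) (\<nu> k))) + (\<Sum>i\<in>{l+1..p}. \<bar>H i (x k) (\<nu> k)\<bar>)" for k
  have e0: "e k \<ge> 0" for k unfolding e_def by (intro add_nonneg_nonneg sum_nonneg) auto
  have eI: "\<forall>i\<in>{1..l}. H i (x k) (\<nu> k) \<le> e k" for k
  proof
    fix i assume i: "i \<in> {1..l}"
    have "H i (x k) (\<nu> k) \<le> max 0 (H i (x k) (\<nu> k))" by simp
    also have "\<dots> \<le> (\<Sum>i\<in>{1..l}. max 0 (H i (x k) (\<nu> k)))"
      by (rule member_le_sum[OF i]) auto
    also have "\<dots> \<le> e k" unfolding e_def by (simp add: sum_nonneg)
    finally show "H i (x k) (\<nu> k) \<le> e k" .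
  qed
  have eJ: "\<forall>i\<in>{l+1..p}. \<bar>H i (x k) (\<nu> k)\<bar> \<le> e k" for k
  proof
    fix i assume i: "i \<in> {l+1..p}"
    have "\<bar>H i (x k) (\<nu> k)\<bar> \<le> (\<Sum>i\<in>{l+1..p}. \<bar>H i (x k) (\<nu> k)\<bar>)"
      by (rule member_le_sum[OF i]) auto
    also have "\<dots> \<le> e k" unfolding e_def by (simp add: sum_nonneg)
    finally show "\<bar>H i (x k) (\<nu> k)\<bar> \<le> e k" .
  qed
  have elim: "e \<longlonglongrightarrow> 0"
  proof -
    have "e \<longlonglongrightarrow> (\<Sum>i\<in>{1..l}. max 0 (H i xb yb)) + (\<Sum>i\<in>{l+1..p}. \<bar>H i xb yb\<bar>)"
      unfolding e_def
    proof (intro tendsto_add tendsto_sum tendsto_max tendsto_rabs tendsto_const)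
      fix i assume "i \<in> {1..l}"
      then have "i \<in> {1..p}" using lp by auto
      then show "(\<lambda>k. H i (x k) (\<nu> k)) \<longlonglongrightarrow> H i xb yb" using seqlim ybU x_lim \<nu>_lim by blast
    next
      fix i assume "i \<in> {l+1..p}"
      then have "i \<in> {1..p}" by auto
      then show "(\<lambda>k. H i (x k) (\<nu> k)) \<longlonglongrightarrow> H i xb yb" using seqlim ybU x_lim \<nu>_lim by blast
    qed
    also have "(\<Sum>i\<in>{1..l}. max 0 (H i xb yb)) + (\<Sum>i\<in>{l+1..p}. \<bar>H i xb yb\<bar>) = 0"
    proof -
      have "(\<Sum>i\<in>{1..l}. max 0 (H i xb yb)) = (\<Sum>i\<in>{1..l}. 0)"
        using Hyb_I by (intro sum.cong) (auto simp: max_def, fastforce)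
      moreover have "(\<Sum>i\<in>{l+1..p}. \<bar>H i xb yb\<bar>) = (\<Sum>i\<in>{l+1..p}. 0)"
        using Hyb_J by (intro sum.cong) auto
      ultimately show ?thesis by simp
    qed
    finally show ?thesis .
  qed
  have bnd: "eventually (\<lambda>k. norm (yk k - \<nu> k) \<le> M * e k) sequentially"
    using evL
  proof eventually_elim
    case (elim k)
    then obtain lam where "lam \<in> LamM h l p M (\<nu> k) (x k) (yk k)" by blast
    then show ?case using key[of k lam "e k"] elim e0 eI eJ by blast
  qed
  have "(\<lambda>k. yk k - \<nu> k) \<longlonglongrightarrow> 0"
    using bnd tendsto_mult_right_zero[OF elim, of M] by (rule Lim_null_comparison)
  then have "(\<lambda>k. (yk k - \<nu> k) + \<nu> k) \<longlonglongrightarrow> 0 + yb" using \<nu>_lim by (rule tendsto_add)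
  then have conv: "yk \<longlonglongrightarrow> yb" by simp
  have ev2: "eventually (\<lambda>k. ereal (infdist (\<nu> k) (Gamma h l p (x k)))
        \<le> ereal M * max 0 (max (SUP i\<in>{1..l}. h i (x k) (\<nu> k))
                               (SUP i\<in>{l+1..p}. \<bar>h i (x k) (\<nu> k)\<bar>))) sequentially"
    using evL
  proof eventually_elim
    case (elim k)
    then obtain lam where lam: "lam \<in> LamM h l p M (\<nu> k) (x k) (yk k)" by blast
    define E where "E = max 0 (max (SUP i\<in>{1..l}. h i (x k) (\<nu> k)) (SUP i\<in>{l+1..p}. \<bar>h i (x k) (\<nu> k)\<bar>))"
    have inf: "infdist (\<nu> k) (G (x k)) \<le> norm (yk k - \<nu> k)"
      using infdist_le[OF ykG[of k], of "\<nu> k"] by (simp add: dist_norm norm_minus_commute)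
    have E0: "0 \<le> E" unfolding E_def by simp
    show ?case
    proof (cases E)
      case (real r)
      have r0: "r \<ge> 0" using E0 real by simp
      have rI: "\<forall>i\<in>{1..l}. H i (x k) (\<nu> k) \<le> r"
      proof
        fix i assume i: "i \<in> {1..l}"
        have "h i (x k) (\<nu> k) \<le> (SUP i\<in>{1..l}. h i (x k) (\<nu> k))" by (rule SUP_upper[OF i])
        also have "\<dots> \<le> E" unfolding E_def by (rule order_trans[OF max.cobounded1 max.cobounded2])
        finally show "H i (x k) (\<nu> k) \<le> r" using domfin[OF xdom, of i] i lp real by auto
      qed
      have rJ: "\<forall>i\<in>{l+1..p}. \<bar>H i (x k) (\<nu> k)\<bar> \<le> r"
      proof
        fix i assume i: "i \<in> {l+1..p}"
        have "\<bar>h i (x k) (\<nu> k)\<bar> \<le> (SUP i\<in>{l+1..p}. \<bar>h i (x k) (\<nu> k)\<bar>)" by (rule SUP_upper[OF i])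
        also have "\<dots> \<le> E" unfolding E_def by (rule order_trans[OF max.cobounded2 max.cobounded2])
        finally show "\<bar>H i (x k) (\<nu> k)\<bar> \<le> r" using domfin[OF xdom, of i] i real by auto
      qed
      have "infdist (\<nu> k) (G (x k)) \<le> M * r" using inf key[OF _ lam r0 rI rJ] elim by linarith
      then show ?thesis using real unfolding E_def[symmetric] G_def by simp
    next
      case PInf
      then show ?thesis using M_pos unfolding E_def[symmetric] by simp
    next
      case MInf
      then show ?thesis using E0 by simp
    qed
  qed
  show ?thesis using conv ev2 by blast
qed

end
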